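(* Let $f:\Delta^2\to\mathbb R$ be a smooth, $T\ltimes\mathcal S_2$-invariant, strictly plurisubharmonic function and let $r,s\in\mathbb R$. Let $\tilde f:\mathbb R^2\to\mathbb R$, $\tilde f(a_1,a_2)=f(\tanh a_1,\tanh a_2)$ (a $W_{\mathbb R^2}$-invariant function), and for $\sinh^2a_1\neq\sinh^2a_2$ define $$G_{\tilde f}(a_1,a_2)=\frac{r\sinh(2a_1)\frac{\partial\tilde f}{\partial a_1}(a_1,a_2)-s\sinh(2a_2)\frac{\partial\tilde f}{\partial a_2}(a_1,a_2)}{\sinh^2a_1-\sinh^2a_2}.$$ Then: (i) $\frac{\partial\tilde f}{\partial a_1}(a_1,a_2)>0$ whenever $a_1>0$ and $<0$ whenever $a_1<0$; in particular $\frac{\partial\tilde f}{\partial a_1}(0,a_2)=0$ for all $a_2\in\mathbb R$. (ii) $\frac{\partial\tilde f}{\partial a_2}(a_1,a_2)=\frac{\partial\tilde f}{\partial a_1}(a_2,a_1)$; in particular $\frac{\partial\tilde f}{\partial a_2}(a_1,0)=0$ for all $a_1$. (iii) If $G_{\tilde f}$ extends continuously to a strictly positive function on $\mathbb R^2$, then $r=s>0$; in particular $G_{\tilde f}$ is then $W_{\mathbb R^2}$-invariant.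
   Context: $\Delta$ is the unit disc in $\mathbb C$ and $\Delta^2$ the unit bidisc. $T=(S^1)^2$ acts on $\Delta^2$ by coordinatewise rotations and $\mathcal S_2$ by permutation of the two coordinates. $W_{\mathbb R^2}=(\mathbb Z_2)^2\rtimes\mathcal S_2$ acts on $\mathbb R^2$ by signed permutations of the coordinates. *)

theory Defs
  imports "HOL-Analysis.Analysis"
begin

definition bidisc :: "(complex \<times> complex) set" where
  "bidisc = {(z, w). norm z < 1 \<and> norm w < 1}"

fun dderiv :: "'a::real_normed_vector list \<Rightarrow> ('a \<Rightarrow> real) \<Rightarrow> ('a \<Rightarrow> real)" where
  "dderiv [] f = f"
| "dderiv (v # vs) f = (\<lambda>x. frechet_derivative (dderiv vs f) (at x) v)"

definition smooth_on :: "('a::real_normed_vector \<Rightarrow> real) \<Rightarrow> 'a set \<Rightarrow> bool" where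
  "smooth_on f S \<longleftrightarrow> (\<forall>vs. dderiv vs f differentiable_on S)"

definition dir_x :: "nat \<Rightarrow> complex \<times> complex" where
  "dir_x j = (if j = 0 then (1, 0) else (0, 1))"
definition dir_y :: "nat \<Rightarrow> complex \<times> complex" where
  "dir_y j = (if j = 0 then (\<i>, 0) else (0, \<i>))"

text \<open>Complex mixed second derivative d^2 f / (dz_j d conj(z_k)) at p
  = 1/4 (f_{x_j x_k} + f_{y_j y_k} + i (f_{x_j y_k} - f_{y_j x_k})).\<close>
definition levi_coeff :: "(complex \<times> complex \<Rightarrow> real) \<Rightarrow> complex \<times> complex \<Rightarrow> nat \<Rightarrow> nat \<Rightarrow> complex" where
  "levi_coeff f p j k =
     (complex_of_real (dderiv [dir_x j, dir_x k] f p + dderiv [dir_y j, dir_y k] f p)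
      + \<i> * complex_of_real (dderiv [dir_x j, dir_y k] f p - dderiv [dir_y j, dir_x k] f p)) / 4"

definition levi_form :: "(complex \<times> complex \<Rightarrow> real) \<Rightarrow> complex \<times> complex \<Rightarrow> complex \<times> complex \<Rightarrow> complex" where
  "levi_form f p xi =
     (\<Sum>j<2. \<Sum>k<2. levi_coeff f p j k * (if j = 0 then fst xi else snd xi)
                       * cnj (if k = 0 then fst xi else snd xi))"

text \<open>Strictly plurisubharmonic (for smooth f): positive definite Levi form at every point of S.\<close>
definition strictly_psh_on :: "(complex \<times> complex \<Rightarrow> real) \<Rightarrow> (complex \<times> complex) set \<Rightarrow> bool" where
  "strictly_psh_on f S \<longleftrightarrow>
     (\<forall>p\<in>S. \<forall>xi. xi \<noteq> 0 \<longrightarrow> Re (levi_form f p xi) > 0)"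

definition torus_swap_invariant :: "(complex \<times> complex \<Rightarrow> real) \<Rightarrow> bool" where
  "torus_swap_invariant f \<longleftrightarrow>
     (\<forall>z w. (z, w) \<in> bidisc \<longrightarrow>
        (\<forall>t1 t2::real. f (cis t1 * z, cis t2 * w) = f (z, w)) \<and> f (w, z) = f (z, w))"

definition ftilde :: "(complex \<times> complex \<Rightarrow> real) \<Rightarrow> real \<Rightarrow> real \<Rightarrow> real" where
  "ftilde f a1 a2 = f (complex_of_real (tanh a1), complex_of_real (tanh a2))"

definition D1 :: "(real \<Rightarrow> real \<Rightarrow> real) \<Rightarrow> real \<Rightarrow> real \<Rightarrow> real" where
  "D1 g a1 a2 = deriv (\<lambda>t. g t a2) a1"
definition D2 :: "(real \<Rightarrow> real \<Rightarrow> real) \<Rightarrow> real \<Rightarrow> real \<Rightarrow> real" where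
  "D2 g a1 a2 = deriv (\<lambda>t. g a1 t) a2"

text \<open>G_{ftilde}, meaningful where sinh^2 a1 \<noteq> sinh^2 a2.\<close>
definition Gfun :: "real \<Rightarrow> real \<Rightarrow> (complex \<times> complex \<Rightarrow> real) \<Rightarrow> real \<Rightarrow> real \<Rightarrow> real" where
  "Gfun r s f a1 a2 =
     (r * sinh (2 * a1) * D1 (ftilde f) a1 a2 - s * sinh (2 * a2) * D2 (ftilde f) a1 a2)
     / ((sinh a1)\<^sup>2 - (sinh a2)\<^sup>2)"

end

theory Submission imports Defs begin

lemma path_deriv:
  assumes "(f has_derivative L) (at (\<gamma> t))" "(\<gamma> has_vector_derivative v) (at t)"
  shows "((\<lambda>s. f (\<gamma> s)) has_real_derivative L v) (at t)"
proof -
  have "((f \<circ> \<gamma>) has_derivative (L \<circ> (\<lambda>x. x *\<^sub>R v))) (at t)"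
    using diff_chain_at assms(2)[unfolded has_vector_derivative_def] assms(1) by blast
  moreover have "bounded_linear L" using has_derivative_bounded_linear assms(1) by blast
  then have "L \<circ> (\<lambda>x. x *\<^sub>R v) = (\<lambda>x. L v * x)"
    by (auto simp: bounded_linear.linear linear_scale mult.commute)
  ultimately show ?thesis by (simp add: has_field_derivative_def o_def)
qed

lemma open_bidisc: "open bidisc"
proof -
  have "bidisc = ball (0::complex) 1 \<times> ball (0::complex) 1" by (auto simp: bidisc_def)
  then show ?thesis by (metis open_Times open_ball)
qed

lemma smooth_diff:
  assumes "smooth_on f bidisc" "q \<in> bidisc"
  shows "(dderiv vs f has_derivative frechet_derivative (dderiv vs f) (at q)) (at q)"
proof -
  have "dderiv vs f differentiable_on bidisc" using assms(1) by (simp add: smooth_on_def)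
  then have "dderiv vs f differentiable at q"
    using differentiable_on_eq_differentiable_at[OF open_bidisc] assms(2) by blast
  then show ?thesis using frechet_derivative_works by blast
qed

lemma smooth_diff0:
  assumes "smooth_on f bidisc" "q \<in> bidisc"
  shows "(f has_derivative frechet_derivative f (at q)) (at q)"
  using smooth_diff[OF assms, of "[]"] by simp

lemma lin_L:
  assumes "(f has_derivative L) F"
  shows "L (a *\<^sub>R x + b *\<^sub>R y) = a * L x + b * L y"
proof -
  have "bounded_linear L" using has_derivative_bounded_linear assms by blast
  then show ?thesis by (simp add: bounded_linear.linear linear_add linear_scale)
qed


lemma cis_vd: "((\<lambda>t. cis t * z) has_vector_derivative (\<i> * cis t * z)) (at t)"
proof -
  have "(cis has_derivative (\<lambda>s. s *\<^sub>R (\<i> * cis t))) (at t)"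
    using has_derivative_cis[OF has_derivative_ident] by simp
  then have "(cis has_vector_derivative (\<i> * cis t)) (at t)"
    by (simp add: has_vector_derivative_def)
  from has_vector_derivative_mult_left[OF this, of z] show ?thesis by simp
qed

lemma rot0:
  assumes sm: "smooth_on f bidisc" and inv: "torus_swap_invariant f" and q: "(z, c) \<in> bidisc"
  shows "frechet_derivative f (at (z, c)) (\<i> * z, 0) = 0"
proof -
  let ?g = "\<lambda>t::real. (cis t * z, c)"
  have vd: "(?g has_vector_derivative (\<i> * z, 0)) (at 0)"
    using has_vector_derivative_Pair[OF cis_vd[of z 0] has_vector_derivative_const[of c]] by simp
  have "(f has_derivative frechet_derivative f (at (z, c))) (at (?g 0))"
    using smooth_diff0[OF sm q] by simp
  from path_deriv[OF this vd]
  have d1: "((\<lambda>s. f (?g s)) has_real_derivative frechet_derivative f (at (z, c)) (\<i> * z, 0)) (at 0)" .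
  have "\<And>s. f (?g s) = f (z, c)"
  proof -
    fix s :: real
    have "f (cis s * z, cis 0 * c) = f (z, c)" using inv q unfolding torus_swap_invariant_def by blast
    then show "f (?g s) = f (z, c)" by simp
  qed
  then have "((\<lambda>s. f (?g s)) has_real_derivative 0) (at 0)" by simp
  with d1 show ?thesis using DERIV_unique by blast
qed

lemma fy_eq:
  assumes sm: "smooth_on f bidisc" and inv: "torus_swap_invariant f"
    and q: "(complex_of_real x + \<i> * complex_of_real t, c) \<in> bidisc"
  shows "x * frechet_derivative f (at (complex_of_real x + \<i> * complex_of_real t, c)) (\<i>, 0)
       = t * frechet_derivative f (at (complex_of_real x + \<i> * complex_of_real t, c)) (1, 0)"
proof -
  let ?z = "complex_of_real x + \<i> * complex_of_real t"
  have e: "(\<i> * ?z, 0::complex) = x *\<^sub>R (\<i>, 0) + (-t) *\<^sub>R (1, 0)"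
    by (simp add: complex_eq_iff scaleR_conv_of_real algebra_simps)
  have "frechet_derivative f (at (?z, c)) (\<i> * ?z, 0) = 0" using rot0[OF sm inv q] .
  then show ?thesis unfolding e lin_L[OF smooth_diff0[OF sm q]] by simp
qed


lemma fx_simp: "dderiv [dir_x 0] f q = frechet_derivative f (at q) (1, 0)"
  by (simp add: dir_x_def)
lemma fy_simp: "dderiv [dir_y 0] f q = frechet_derivative f (at q) (\<i>, 0)"
  by (simp add: dir_y_def)

lemma vline_vd: "((\<lambda>s::real. (complex_of_real x + \<i> * complex_of_real s, c)) has_vector_derivative (\<i>, 0)) (at t)"
proof -
  have "((\<lambda>s::real. complex_of_real s) has_vector_derivative 1) (at t)"
    using has_vector_derivative_of_real[OF DERIV_ident] by simp
  then have "((\<lambda>s::real. \<i> * complex_of_real s) has_vector_derivative \<i>) (at t)"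
    using has_vector_derivative_mult_right[of _ 1 _ \<i>] by simp
  then have "((\<lambda>s::real. complex_of_real x + \<i> * complex_of_real s) has_vector_derivative \<i>) (at t)"
    using has_vector_derivative_add[OF has_vector_derivative_const] by fastforce
  then show ?thesis using has_vector_derivative_Pair[OF _ has_vector_derivative_const] by blast
qed

lemma fyy_eq:
  assumes sm: "smooth_on f bidisc" and inv: "torus_swap_invariant f"
    and x: "0 < x" "x < 1" and c: "norm c < 1"
  shows "frechet_derivative (dderiv [dir_y 0] f) (at (complex_of_real x, c)) (\<i>, 0)
       = dderiv [dir_x 0] f (complex_of_real x, c) / x"
proof -
  let ?b = "\<lambda>s::real. (complex_of_real x + \<i> * complex_of_real s, c)"
  let ?fy = "dderiv [dir_y 0] f" and ?fx = "dderiv [dir_x 0] f"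
  have b0: "?b 0 = (complex_of_real x, c)" by simp
  have inS: "?b s \<in> bidisc" if "s \<in> ball 0 (1 - x)" for s
  proof -
    have "norm (complex_of_real x + \<i> * complex_of_real s) \<le> norm (complex_of_real x) + norm (\<i> * complex_of_real s)"
      by (rule norm_triangle_ineq)
    also have "\<dots> = x + \<bar>s\<bar>" using x by (simp add: norm_mult)
    also have "\<dots> < 1" using that by (simp add: dist_real_def)
    finally show ?thesis using c by (simp add: bidisc_def)
  qed
  have p0: "(complex_of_real x, c) \<in> bidisc" using inS[of 0] x by simp
  have "(?fy has_derivative frechet_derivative ?fy (at (complex_of_real x, c))) (at (?b 0))"
    using smooth_diff[OF sm p0] by (simp del: dderiv.simps)
  from path_deriv[OF this vline_vd]
  have d1: "((\<lambda>s. ?fy (?b s)) has_real_derivative frechet_derivative ?fy (at (complex_of_real x, c)) (\<i>, 0)) (at 0)" .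
  have "(?fx has_derivative frechet_derivative ?fx (at (complex_of_real x, c))) (at (?b 0))"
    using smooth_diff[OF sm p0] by (simp del: dderiv.simps)
  from path_deriv[OF this vline_vd]
  have d2: "((\<lambda>s. ?fx (?b s)) has_real_derivative frechet_derivative ?fx (at (complex_of_real x, c)) (\<i>, 0)) (at 0)" .
  have d3: "((\<lambda>s. s * ?fx (?b s) / x) has_real_derivative ?fx (complex_of_real x, c) / x) (at 0)"
    using DERIV_cdivide[OF DERIV_mult[OF DERIV_ident d2], of x] by simp
  have eq: "s * ?fx (?b s) / x = ?fy (?b s)" if "s \<in> ball 0 (1 - x)" for s
    using fy_eq[OF sm inv inS[OF that]] x unfolding fx_simp fy_simp by (simp add: field_simps)
  have "((\<lambda>s. ?fy (?b s)) has_real_derivative ?fx (complex_of_real x, c) / x) (at 0)"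
    by (rule has_field_derivative_transform_within_open[OF d3 open_ball[of 0 "1 - x"] _ eq]) (use x in auto)
  with d1 show ?thesis using DERIV_unique by blast
qed


lemma lap_pos:
  assumes psh: "strictly_psh_on f bidisc" and p: "p \<in> bidisc"
  shows "frechet_derivative (dderiv [dir_x 0] f) (at p) (1, 0)
       + frechet_derivative (dderiv [dir_y 0] f) (at p) (\<i>, 0) > 0"
proof -
  have nz: "(1::complex, 0::complex) \<noteq> 0" by (simp add: zero_prod_def)
  have "Re (levi_form f p (1, 0)) > 0" using psh p nz unfolding strictly_psh_on_def by blast
  moreover have "levi_form f p (1, 0) = levi_coeff f p 0 0"
    by (simp add: levi_form_def numeral_2_eq_2 lessThan_Suc)
  moreover have "Re (levi_coeff f p 0 0) = (dderiv [dir_x 0, dir_x 0] f p + dderiv [dir_y 0, dir_y 0] f p) / 4"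
    by (simp only: levi_coeff_def) simp
  moreover have "dderiv [dir_x 0, dir_x 0] f p = frechet_derivative (dderiv [dir_x 0] f) (at p) (1, 0)"
    by (simp only: dderiv.simps(2)[of "dir_x 0" "[dir_x 0]"]) (simp add: dir_x_def)
  moreover have "dderiv [dir_y 0, dir_y 0] f p = frechet_derivative (dderiv [dir_y 0] f) (at p) (\<i>, 0)"
    by (simp only: dderiv.simps(2)[of "dir_y 0" "[dir_y 0]"]) (simp add: dir_y_def)
  ultimately show ?thesis by simp
qed

lemma hline_vd: "((\<lambda>s::real. (complex_of_real s, c)) has_vector_derivative (1, 0)) (at t)"
proof -
  have "((\<lambda>s::real. complex_of_real s) has_vector_derivative 1) (at t)"
    using has_vector_derivative_of_real[OF DERIV_ident] by simp
  then show ?thesis using has_vector_derivative_Pair[OF _ has_vector_derivative_const] by blast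
qed

lemma fx_pos:
  assumes sm: "smooth_on f bidisc" and inv: "torus_swap_invariant f" and psh: "strictly_psh_on f bidisc"
    and x: "0 < x" "x < 1" and c: "norm c < 1"
  shows "dderiv [dir_x 0] f (complex_of_real x, c) > 0"
proof -
  let ?fx = "dderiv [dir_x 0] f" and ?fy = "dderiv [dir_y 0] f"
  define V where "V t = ?fx (complex_of_real t, c)" for t
  define W where "W t = frechet_derivative ?fx (at (complex_of_real t, c)) (1, 0)" for t
  have dV: "(V has_real_derivative W t) (at t)" if "\<bar>t\<bar> < 1" for t
  proof -
    have pt: "(complex_of_real t, c) \<in> bidisc" using that c by (simp add: bidisc_def)
    have "(?fx has_derivative frechet_derivative ?fx (at (complex_of_real t, c))) (at ((\<lambda>s. (complex_of_real s, c)) t))"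
      using smooth_diff[OF sm pt] by (simp del: dderiv.simps)
    from path_deriv[OF this hline_vd] show ?thesis unfolding V_def W_def .
  qed
  have dh: "((\<lambda>t. t * V t) has_real_derivative (V t + t * W t)) (at t)" if "0 \<le> t" "t \<le> x" for t
    using DERIV_mult[OF DERIV_ident dV[of t]] that x by (simp add: mult.commute)
  obtain z where z: "0 < z" "z < x" "x * V x - 0 * V 0 = (x - 0) * (V z + z * W z)"
    using MVT2[OF x(1) dh] by blast
  have pz: "(complex_of_real z, c) \<in> bidisc" using z x c by (simp add: bidisc_def)
  have "V z = z * frechet_derivative ?fy (at (complex_of_real z, c)) (\<i>, 0)"
    using fyy_eq[OF sm inv z(1) _ c] z x unfolding V_def by simp
  then have "V z + z * W z = z * (W z + frechet_derivative ?fy (at (complex_of_real z, c)) (\<i>, 0))"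
    by (simp add: algebra_simps)
  moreover have "W z + frechet_derivative ?fy (at (complex_of_real z, c)) (\<i>, 0) > 0"
    using lap_pos[OF psh pz] unfolding W_def .
  ultimately have "V z + z * W z > 0" using z by simp
  then have "x * V x > 0" using z x by simp
  then show ?thesis using x unfolding V_def by (simp add: zero_less_mult_iff)
qed


lemma abs_tanh_lt1: "\<bar>tanh (a::real)\<bar> < 1"
  using tanh_real_bounds[of a] by auto

lemma tanh_in_bidisc: "(complex_of_real (tanh a), complex_of_real (tanh b)) \<in> bidisc"
  using abs_tanh_lt1[of a] abs_tanh_lt1[of b] by (simp add: bidisc_def)

lemma f_even1:
  assumes inv: "torus_swap_invariant f" and q: "(z, w) \<in> bidisc"
  shows "f (- z, w) = f (z, w)"
proof -
  have "f (cis pi * z, cis 0 * w) = f (z, w)" using inv q unfolding torus_swap_invariant_def by blast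
  then show ?thesis by simp
qed

lemma fx_odd:
  assumes sm: "smooth_on f bidisc" and inv: "torus_swap_invariant f"
    and t: "\<bar>t\<bar> < 1" and c: "norm c < 1"
  shows "dderiv [dir_x 0] f (complex_of_real t, c) = - dderiv [dir_x 0] f (complex_of_real (-t), c)"
proof -
  have pt: "(complex_of_real t, c) \<in> bidisc" and pmt: "(complex_of_real (-t), c) \<in> bidisc"
    using t c by (auto simp: bidisc_def)
  have "(f has_derivative frechet_derivative f (at (complex_of_real t, c))) (at ((\<lambda>s. (complex_of_real s, c)) t))"
    using smooth_diff0[OF sm pt] by simp
  from path_deriv[OF this hline_vd]
  have d1: "((\<lambda>s. f (complex_of_real s, c)) has_real_derivative dderiv [dir_x 0] f (complex_of_real t, c)) (at t)"
    unfolding fx_simp by simp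
  have vd: "((\<lambda>s::real. (complex_of_real (-s), c)) has_vector_derivative (-1, 0)) (at t)"
  proof -
    have "((\<lambda>s::real. complex_of_real (-s)) has_vector_derivative -1) (at t)"
      using has_vector_derivative_of_real[OF DERIV_minus[OF DERIV_ident]] by simp
    then show ?thesis using has_vector_derivative_Pair[OF _ has_vector_derivative_const] by blast
  qed
  have "(f has_derivative frechet_derivative f (at (complex_of_real (-t), c))) (at ((\<lambda>s. (complex_of_real (-s), c)) t))"
    using smooth_diff0[OF sm pmt] by simp
  from path_deriv[OF this vd]
  have d2: "((\<lambda>s. f (complex_of_real (-s), c)) has_real_derivative frechet_derivative f (at (complex_of_real (-t), c)) (-1, 0)) (at t)" .
  have "(-1::complex, 0::complex) = (-1) *\<^sub>R (1, 0) + 0 *\<^sub>R (1, 0)" by simp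
  then have "frechet_derivative f (at (complex_of_real (-t), c)) (-1, 0) = - dderiv [dir_x 0] f (complex_of_real (-t), c)"
    using lin_L[OF smooth_diff0[OF sm pmt], of "-1" "(1,0)" 0 "(1,0)"] unfolding fx_simp by simp
  with d2 have d2': "((\<lambda>s. f (complex_of_real (-s), c)) has_real_derivative - dderiv [dir_x 0] f (complex_of_real (-t), c)) (at t)" by simp
  have eq: "f (complex_of_real (-s), c) = f (complex_of_real s, c)" if "s \<in> {-1<..<1}" for s
    using f_even1[OF inv, of "complex_of_real s" c] that c by (simp add: bidisc_def abs_less_iff)
  have "((\<lambda>s. f (complex_of_real s, c)) has_real_derivative - dderiv [dir_x 0] f (complex_of_real (-t), c)) (at t)"
    by (rule has_field_derivative_transform_within_open[OF d2' open_greaterThanLessThan _ eq]) (use t in auto)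
  with d1 show ?thesis using DERIV_unique by blast
qed

lemma D1_formula:
  assumes sm: "smooth_on f bidisc"
  shows "D1 (ftilde f) a1 a2 = dderiv [dir_x 0] f (complex_of_real (tanh a1), complex_of_real (tanh a2)) * (1 - tanh a1 ^ 2)"
proof -
  let ?c = "complex_of_real (tanh a2)"
  have p: "(complex_of_real (tanh a1), ?c) \<in> bidisc" by (rule tanh_in_bidisc)
  have dt: "(tanh has_real_derivative 1 - tanh a1 ^ 2) (at a1)"
    by (auto intro!: derivative_eq_intros)
  have vd: "((\<lambda>s::real. (complex_of_real (tanh s), ?c)) has_vector_derivative (complex_of_real (1 - tanh a1 ^ 2), 0)) (at a1)"
    using has_vector_derivative_Pair[OF has_vector_derivative_of_real[OF dt] has_vector_derivative_const] .
  have "(f has_derivative frechet_derivative f (at (complex_of_real (tanh a1), ?c))) (at ((\<lambda>s. (complex_of_real (tanh s), ?c)) a1))"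
    using smooth_diff0[OF sm p] by simp
  from path_deriv[OF this vd]
  have d: "((\<lambda>s. f (complex_of_real (tanh s), ?c)) has_real_derivative frechet_derivative f (at (complex_of_real (tanh a1), ?c)) (complex_of_real (1 - tanh a1 ^ 2), 0)) (at a1)" .
  have "(complex_of_real (1 - tanh a1 ^ 2), 0::complex) = (1 - tanh a1 ^ 2) *\<^sub>R (1, 0) + 0 *\<^sub>R (1, 0)"
    by (simp add: scaleR_conv_of_real)
  then have "frechet_derivative f (at (complex_of_real (tanh a1), ?c)) (complex_of_real (1 - tanh a1 ^ 2), 0)
     = dderiv [dir_x 0] f (complex_of_real (tanh a1), ?c) * (1 - tanh a1 ^ 2)"
    using lin_L[OF smooth_diff0[OF sm p], of "1 - tanh a1 ^ 2" "(1,0)" 0 "(1,0)"] unfolding fx_simp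
    by (simp add: mult.commute)
  with d show ?thesis unfolding D1_def ftilde_def by (simp add: DERIV_imp_deriv)
qed


lemma D1_pos:
  assumes sm: "smooth_on f bidisc" and inv: "torus_swap_invariant f" and psh: "strictly_psh_on f bidisc"
    and a: "a1 > 0"
  shows "D1 (ftilde f) a1 a2 > 0"
proof -
  have "tanh a1 > 0" "tanh a1 < 1" using a tanh_real_bounds[of a1] by auto
  then have "dderiv [dir_x 0] f (complex_of_real (tanh a1), complex_of_real (tanh a2)) > 0"
    using fx_pos[OF sm inv psh] abs_tanh_lt1[of a2] by simp
  moreover have "1 - tanh a1 ^ 2 > 0" using abs_tanh_lt1[of a1] by (simp add: abs_square_less_1)
  ultimately show ?thesis unfolding D1_formula[OF sm] by simp
qed

lemma D1_odd:
  assumes sm: "smooth_on f bidisc" and inv: "torus_swap_invariant f"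
  shows "D1 (ftilde f) (-a1) a2 = - D1 (ftilde f) a1 a2"
  unfolding D1_formula[OF sm] using fx_odd[OF sm inv abs_tanh_lt1[of a1], of "complex_of_real (tanh a2)"]
    abs_tanh_lt1[of a2] by simp

lemma ftilde_swap:
  assumes inv: "torus_swap_invariant f"
  shows "ftilde f a b = ftilde f b a"
  using inv tanh_in_bidisc[of b a] unfolding torus_swap_invariant_def ftilde_def by auto

lemma ftilde_even1:
  assumes inv: "torus_swap_invariant f"
  shows "ftilde f (-a) b = ftilde f a b"
  using f_even1[OF inv tanh_in_bidisc[of a b]] unfolding ftilde_def by simp

lemma ftilde_even2:
  assumes inv: "torus_swap_invariant f"
  shows "ftilde f a (-b) = ftilde f a b"
  using ftilde_even1[OF inv] ftilde_swap[OF inv] by metis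

lemma D2_swap:
  assumes inv: "torus_swap_invariant f"
  shows "D2 (ftilde f) a1 a2 = D1 (ftilde f) a2 a1"
  unfolding D1_def D2_def using ftilde_swap[OF inv] by metis

lemma D1_cont:
  assumes sm: "smooth_on f bidisc"
  shows "isCont (\<lambda>t. D1 (ftilde f) t b) a" "isCont (\<lambda>t. D1 (ftilde f) b t) a"
proof -
  let ?fx = "dderiv [dir_x 0] f"
  have c: "isCont ?fx q" if "q \<in> bidisc" for q
    using has_derivative_continuous[OF smooth_diff[OF sm that]] .
  have "isCont (\<lambda>t. (complex_of_real (tanh t), complex_of_real (tanh b))) a"
    by (intro continuous_intros) auto
  from isCont_o2[OF this c[OF tanh_in_bidisc]]
  have "isCont (\<lambda>t. ?fx (complex_of_real (tanh t), complex_of_real (tanh b)) * (1 - tanh t ^ 2)) a"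
    by (intro continuous_intros) auto
  then show "isCont (\<lambda>t. D1 (ftilde f) t b) a" unfolding D1_formula[OF sm] .
  have "isCont (\<lambda>t. (complex_of_real (tanh b), complex_of_real (tanh t))) a"
    by (intro continuous_intros) auto
  from isCont_o2[OF this c[OF tanh_in_bidisc]]
  have "isCont (\<lambda>t. ?fx (complex_of_real (tanh b), complex_of_real (tanh t)) * (1 - tanh b ^ 2)) a"
    by (intro continuous_intros) auto
  then show "isCont (\<lambda>t. D1 (ftilde f) b t) a" unfolding D1_formula[OF sm] .
qed


theorem lemma2p5:
  fixes f :: "complex \<times> complex \<Rightarrow> real" and r s :: real
  assumes "smooth_on f bidisc"
    and "torus_swap_invariant f"
    and "strictly_psh_on f bidisc"
  shows "(\<forall>a1 a2. (a1 > 0 \<longrightarrow> D1 (ftilde f) a1 a2 > 0) \<and> (a1 < 0 \<longrightarrow> D1 (ftilde f) a1 a2 < 0)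
                   \<and> D1 (ftilde f) 0 a2 = 0)
       \<and> (\<forall>a1 a2. D2 (ftilde f) a1 a2 = D1 (ftilde f) a2 a1 \<and> D2 (ftilde f) a1 0 = 0)
       \<and> ((\<exists>g :: real \<times> real \<Rightarrow> real. continuous_on UNIV g \<and> (\<forall>a. g a > 0)
              \<and> (\<forall>a1 a2. (sinh a1)\<^sup>2 \<noteq> (sinh a2)\<^sup>2 \<longrightarrow> g (a1, a2) = Gfun r s f a1 a2))
          \<longrightarrow> r = s \<and> r > 0
              \<and> (\<forall>a1 a2. (sinh a1)\<^sup>2 \<noteq> (sinh a2)\<^sup>2 \<longrightarrow>
                    Gfun r s f (-a1) a2 = Gfun r s f a1 a2 \<and> Gfun r s f a1 (-a2) = Gfun r s f a1 a2
                    \<and> Gfun r s f a2 a1 = Gfun r s f a1 a2))"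
proof -
  note sm = assms(1) and inv = assms(2) and psh = assms(3)
  have D1z: "D1 (ftilde f) 0 a2 = 0" for a2
    using D1_odd[OF sm inv, of 0 a2] by simp
  have P1: "(a1 > 0 \<longrightarrow> D1 (ftilde f) a1 a2 > 0) \<and> (a1 < 0 \<longrightarrow> D1 (ftilde f) a1 a2 < 0)
                   \<and> D1 (ftilde f) 0 a2 = 0" for a1 a2
  proof (intro conjI impI)
    show "a1 > 0 \<Longrightarrow> D1 (ftilde f) a1 a2 > 0" using D1_pos[OF sm inv psh] by blast
    assume "a1 < 0"
    then have "D1 (ftilde f) (-a1) a2 > 0" using D1_pos[OF sm inv psh] by simp
    then show "D1 (ftilde f) a1 a2 < 0" using D1_odd[OF sm inv, of a1 a2] by simp
  qed (rule D1z)
  have P2: "D2 (ftilde f) a1 a2 = D1 (ftilde f) a2 a1 \<and> D2 (ftilde f) a1 0 = 0" for a1 a2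
    using D2_swap[OF inv] D1z by simp
  have D2odd: "D2 (ftilde f) a1 (-a2) = - D2 (ftilde f) a1 a2" for a1 a2
    using D2_swap[OF inv] D1_odd[OF sm inv] by simp
  have D2even: "D2 (ftilde f) (-a1) a2 = D2 (ftilde f) a1 a2" for a1 a2
  proof -
    have "ftilde f (-a1) = ftilde f a1" by (rule ext) (rule ftilde_even1[OF inv])
    then show ?thesis unfolding D2_def by simp
  qed
  have D1even: "D1 (ftilde f) a1 (-a2) = D1 (ftilde f) a1 a2" for a1 a2
    unfolding D1_def using ftilde_even2[OF inv] by simp
  have P3: "r = s \<and> r > 0
              \<and> (\<forall>a1 a2. (sinh a1)\<^sup>2 \<noteq> (sinh a2)\<^sup>2 \<longrightarrow>
                    Gfun r s f (-a1) a2 = Gfun r s f a1 a2 \<and> Gfun r s f a1 (-a2) = Gfun r s f a1 a2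
                    \<and> Gfun r s f a2 a1 = Gfun r s f a1 a2)"
    if g: "continuous_on UNIV g" "\<forall>a. g a > 0"
         "\<forall>a1 a2. (sinh a1)\<^sup>2 \<noteq> (sinh a2)\<^sup>2 \<longrightarrow> g (a1, a2) = Gfun r s f a1 a2" for g :: "real \<times> real \<Rightarrow> real"
  proof -
    define N where "N t = r * sinh (2 * t) * D1 (ftilde f) t 1 - s * sinh (2 * 1) * D2 (ftilde f) t 1" for t
    define Den where "Den t = (sinh t)\<^sup>2 - (sinh 1)\<^sup>2" for t :: real
    have ev: "eventually (\<lambda>t. g (t, 1) * Den t = N t) (at 1)"
      unfolding eventually_at
    proof (rule exI[of _ 1], intro conjI ballI impI)
      show "(0::real) < 1" by simp
      fix t :: real assume "t \<in> UNIV" and t: "t \<noteq> 1 \<and> dist t 1 < 1"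
      then have "t > 0" by (auto simp: dist_real_def abs_less_iff)
      then have "sinh t \<noteq> sinh 1" "sinh t > 0" "sinh (1::real) > 0" using t by auto
      then have nz: "(sinh t)\<^sup>2 \<noteq> (sinh 1)\<^sup>2" using power2_eq_iff_nonneg by fastforce
      then have "g (t, 1) = N t / Den t" using g(3) unfolding Gfun_def N_def Den_def by simp
      moreover have "Den t \<noteq> 0" using nz unfolding Den_def by simp
      ultimately show "g (t, 1) * Den t = N t" by simp
    qed
    have cg: "isCont (\<lambda>t. g (t, 1)) 1"
    proof -
      have "isCont g (1, 1)" using g(1) by (simp add: continuous_on_eq_continuous_at)
      moreover have c1: "isCont (\<lambda>t::real. (t, 1::real)) 1" by (intro continuous_intros)
      ultimately show ?thesis using isCont_o2[OF c1, of g] by simp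
    qed
    have "((\<lambda>t. g (t, 1) * Den t) \<longlongrightarrow> g (1, 1) * Den 1) (at 1)"
    proof (rule tendsto_mult)
      show "((\<lambda>t. g (t, 1)) \<longlongrightarrow> g (1, 1)) (at 1)" using cg by (simp add: isCont_def)
      have "isCont Den 1" unfolding Den_def by (intro continuous_intros)
      then show "(Den \<longlongrightarrow> Den 1) (at 1)" by (simp add: isCont_def)
    qed
    then have l1: "(N \<longlongrightarrow> 0) (at 1)" using Lim_transform_eventually[OF _ ev] unfolding Den_def by simp
    have "isCont N 1" unfolding N_def D2_swap[OF inv]
      by (intro continuous_intros D1_cont[OF sm])
    then have l2: "(N \<longlongrightarrow> N 1) (at 1)" unfolding isCont_def .
    have "N 1 = 0" using tendsto_unique[OF _ l2 l1] by simp
    then have "(r - s) * sinh 2 * D1 (ftilde f) 1 1 = 0"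
      unfolding N_def D2_swap[OF inv] by (simp add: algebra_simps)
    moreover have "D1 (ftilde f) 1 1 > 0" using P1 by simp
    moreover have "sinh (2::real) > 0" by simp
    ultimately have rs: "r = s" by simp
    have "(sinh (1::real))\<^sup>2 \<noteq> (sinh 0)\<^sup>2" by simp
    then have "g (1, 0) = Gfun r s f 1 0" using g(3) by blast
    then have "Gfun r s f 1 0 > 0" using g(2) by metis
    then have "r * sinh 2 * D1 (ftilde f) 1 0 / (sinh 1)\<^sup>2 > 0" unfolding Gfun_def by simp
    moreover have "D1 (ftilde f) 1 0 > 0" using P1 by simp
    moreover have "sinh (2::real) > 0" "(sinh (1::real))\<^sup>2 > 0" by auto
    ultimately have rpos: "r > 0" by (simp add: zero_less_divide_iff zero_less_mult_iff)
    have inv3: "Gfun r s f (-a1) a2 = Gfun r s f a1 a2 \<and> Gfun r s f a1 (-a2) = Gfun r s f a1 a2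
                    \<and> Gfun r s f a2 a1 = Gfun r s f a1 a2"
      if "(sinh a1)\<^sup>2 \<noteq> (sinh a2)\<^sup>2" for a1 a2
    proof (intro conjI)
      show "Gfun r s f (-a1) a2 = Gfun r s f a1 a2"
        unfolding Gfun_def using D1_odd[OF sm inv] D2even by simp
      show "Gfun r s f a1 (-a2) = Gfun r s f a1 a2"
        unfolding Gfun_def using D1even D2odd by simp
      have e1: "(sinh a2)\<^sup>2 - (sinh a1)\<^sup>2 = - ((sinh a1)\<^sup>2 - (sinh a2)\<^sup>2)" by simp
      have e2: "s * sinh (2 * a2) * D1 (ftilde f) a2 a1 - s * sinh (2 * a1) * D2 (ftilde f) a2 a1
          = - (s * sinh (2 * a1) * D1 (ftilde f) a1 a2 - s * sinh (2 * a2) * D2 (ftilde f) a1 a2)"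
        using D2_swap[OF inv, of a2 a1] D2_swap[OF inv, of a1 a2] by simp
      show "Gfun r s f a2 a1 = Gfun r s f a1 a2"
        unfolding Gfun_def rs e1 e2 by (rule minus_divide_divide)
    qed
    show ?thesis using rs rpos inv3 by blast
  qed
  show ?thesis using P1 P2 P3 by blast
qed

end
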